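(* Let $R$ be a unital associative ring, $n\ge1$, $D_1,D_2$ invertible diagonal $n\times n$ matrices over $R$, and $A,B\in\widehat M_n(R)$. Then $B=D_1^{-1}AD_2$ holds if and only if there is $x\in R^*$ such that $D_1=D_2=xI$ (with $I$ the $n\times n$ identity matrix) and $B=x^{-1}Ax$ (entrywise left multiplication by $x^{-1}$ and right multiplication by $x$). In particular, $A\sim B$ if and only if there is $x\in R^*$ with $B=x^{-1}Ax$.
   Context: $R^*$ denotes the units of $R$. $\widehat M_n(R)=\{A=\{a_{j,k}\}\in M_n(R): a_{1,k}=a_{k,1}=1\text{ for }1\le k\le n\}$. $A\sim B$ means $B=D_1^{-1}AD_2$ for some invertible diagonal matrices $D_1,D_2$. *)

theory Defs
  imports "Jordan_Normal_Form.Matrix"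
begin

text \<open>Matrices over a (not necessarily commutative) unital ring are Jordan_Normal_Form
  matrices; rows/columns are indexed 0..n-1, so the paper's index 1 is index 0 here.\<close>

definition hatM :: "nat \<Rightarrow> 'a::ring_1 mat \<Rightarrow> bool" where
  "hatM n A \<longleftrightarrow> A \<in> carrier_mat n n \<and> (\<forall>k<n. A $$ (0,k) = 1 \<and> A $$ (k,0) = 1)"

definition inv_diag :: "nat \<Rightarrow> 'a::ring_1 mat \<Rightarrow> bool" where
  "inv_diag n D \<longleftrightarrow> D \<in> carrier_mat n n \<and> diagonal_mat D \<and> invertible_mat D"

definition diag_equiv :: "nat \<Rightarrow> 'a::ring_1 mat \<Rightarrow> 'a mat \<Rightarrow> bool" where
  "diag_equiv n A B \<longleftrightarrow> (\<exists>D1 D2 E1. inv_diag n D1 \<and> inv_diag n D2 \<and>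
      E1 \<in> carrier_mat n n \<and> inverts_mat D1 E1 \<and> inverts_mat E1 D1 \<and> B = E1 * A * D2)"

end

theory Submission
  imports Defs
begin

lemma diag_left:
  fixes D M :: "'a::ring_1 mat"
  assumes "D \<in> carrier_mat n n" "diagonal_mat D" "M \<in> carrier_mat n m" "i < n" "j < m"
  shows "(D * M) $$ (i,j) = D $$ (i,i) * M $$ (i,j)"
proof -
  have "(D * M) $$ (i,j) = (\<Sum>k\<in>{0..<n}. D $$ (i,k) * M $$ (k,j))"
    using assms by (simp add: scalar_prod_def)
  also have "\<dots> = D $$ (i,i) * M $$ (i,j) + (\<Sum>k\<in>{0..<n}-{i}. D $$ (i,k) * M $$ (k,j))"
    using assms by (simp add: sum.remove)
  also have "(\<Sum>k\<in>{0..<n}-{i}. D $$ (i,k) * M $$ (k,j)) = 0"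
    using assms by (intro sum.neutral) (auto simp: diagonal_mat_def)
  finally show ?thesis by simp
qed

lemma diag_right:
  fixes D M :: "'a::ring_1 mat"
  assumes "D \<in> carrier_mat n n" "diagonal_mat D" "M \<in> carrier_mat m n" "i < m" "j < n"
  shows "(M * D) $$ (i,j) = M $$ (i,j) * D $$ (j,j)"
proof -
  have "(M * D) $$ (i,j) = (\<Sum>k\<in>{0..<n}. M $$ (i,k) * D $$ (k,j))"
    using assms by (simp add: scalar_prod_def)
  also have "\<dots> = M $$ (i,j) * D $$ (j,j) + (\<Sum>k\<in>{0..<n}-{j}. M $$ (i,k) * D $$ (k,j))"
    using assms by (simp add: sum.remove)
  also have "(\<Sum>k\<in>{0..<n}-{j}. M $$ (i,k) * D $$ (k,j)) = 0"
    using assms by (intro sum.neutral) (auto simp: diagonal_mat_def)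
  finally show ?thesis by simp
qed

lemma core:
  fixes A D1 D2 E1 :: "'a::ring_1 mat"
  assumes "inv_diag n D1" and "inv_diag n D2"
    and "E1 \<in> carrier_mat n n" and "inverts_mat D1 E1" and "inverts_mat E1 D1"
    and "A \<in> carrier_mat n n"
  shows "\<And>i. i < n \<Longrightarrow> D1 $$ (i,i) * E1 $$ (i,i) = 1"
    and "\<And>i. i < n \<Longrightarrow> E1 $$ (i,i) * D1 $$ (i,i) = 1"
    and "diagonal_mat E1"
    and "\<And>i j. i < n \<Longrightarrow> j < n \<Longrightarrow> (E1 * A * D2) $$ (i,j) = E1 $$ (i,i) * A $$ (i,j) * D2 $$ (j,j)"
proof -
  have D1: "D1 \<in> carrier_mat n n" "diagonal_mat D1" and D2: "D2 \<in> carrier_mat n n" "diagonal_mat D2"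
    using assms(1,2) by (auto simp: inv_diag_def)
  have P1: "D1 * E1 = 1\<^sub>m n" using assms(4) D1 by (simp add: inverts_mat_def)
  have P2: "E1 * D1 = 1\<^sub>m n" using assms(5,3) by (simp add: inverts_mat_def)
  show de: "D1 $$ (i,i) * E1 $$ (i,i) = 1" if "i < n" for i
    using diag_left[OF D1 assms(3) that that] P1 that by simp
  show ed: "E1 $$ (i,i) * D1 $$ (i,i) = 1" if "i < n" for i
    using diag_right[OF D1 assms(3) that that] P2 that by simp
  show diagE: "diagonal_mat E1"
    unfolding diagonal_mat_def
  proof (intro allI impI)
    fix i j assume ij: "i < dim_row E1" "j < dim_col E1" "i \<noteq> j"
    hence ij': "i < n" "j < n" using assms(3) by auto
    have "D1 $$ (i,i) * E1 $$ (i,j) = 0"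
      using diag_left[OF D1 assms(3) ij'] P1 ij ij' by simp
    hence "E1 $$ (i,i) * (D1 $$ (i,i) * E1 $$ (i,j)) = 0" by simp
    thus "E1 $$ (i,j) = 0" using ed[OF ij'(1)] by (simp add: mult.assoc[symmetric])
  qed
  show "(E1 * A * D2) $$ (i,j) = E1 $$ (i,i) * A $$ (i,j) * D2 $$ (j,j)" if "i < n" "j < n" for i j
  proof -
    have EA: "E1 * A \<in> carrier_mat n n" using assms(3,6) by auto
    have "(E1 * A * D2) $$ (i,j) = (E1 * A) $$ (i,j) * D2 $$ (j,j)"
      using diag_right[OF D2 EA that] .
    also have "(E1 * A) $$ (i,j) = E1 $$ (i,i) * A $$ (i,j)"
      using diag_left[OF assms(3) diagE assms(6) that] .
    finally show ?thesis .
  qed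
qed

lemma part1:
  fixes A B D1 D2 E1 :: "'a::ring_1 mat" and n :: nat
  assumes "n \<ge> 1"
    and "inv_diag n D1" and "inv_diag n D2"
    and "E1 \<in> carrier_mat n n" and "inverts_mat D1 E1" and "inverts_mat E1 D1"
    and "hatM n A" and "hatM n B"
  shows "(B = E1 * A * D2 \<longleftrightarrow>
           (\<exists>x y. x * y = 1 \<and> y * x = 1 \<and> D1 = x \<cdot>\<^sub>m 1\<^sub>m n \<and> D2 = x \<cdot>\<^sub>m 1\<^sub>m n \<and>
                  B = mat n n (\<lambda>(i,j). y * A $$ (i,j) * x)))"
proof -
  have A: "A \<in> carrier_mat n n" "\<And>k. k < n \<Longrightarrow> A $$ (0,k) = 1 \<and> A $$ (k,0) = 1"
    using assms(7) by (auto simp: hatM_def)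
  have B: "B \<in> carrier_mat n n" "\<And>k. k < n \<Longrightarrow> B $$ (0,k) = 1 \<and> B $$ (k,0) = 1"
    using assms(8) by (auto simp: hatM_def)
  have D1: "D1 \<in> carrier_mat n n" "diagonal_mat D1" and D2: "D2 \<in> carrier_mat n n" "diagonal_mat D2"
    using assms(2,3) by (auto simp: inv_diag_def)
  note c = core[OF assms(2-6) A(1)]
  have n0: "0 < n" using assms(1) by simp
  define d where "d i = D1 $$ (i,i)" for i
  define e where "e i = E1 $$ (i,i)" for i
  define f where "f i = D2 $$ (i,i)" for i
  have de: "d i * e i = 1" "e i * d i = 1" if "i < n" for i using c(1,2) that d_def e_def by auto
  have prod: "(E1 * A * D2) $$ (i,j) = e i * A $$ (i,j) * f j" if "i < n" "j < n" for i j
    using c(4) that e_def f_def by auto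
  have dimP: "E1 * A * D2 \<in> carrier_mat n n" using assms(4) A(1) D2(1) by auto
  show ?thesis
  proof
    assume eq: "B = E1 * A * D2"
    define x0 where "x0 = d 0"
    define y0 where "y0 = e 0"
    have fk: "f k = d 0" if "k < n" for k
    proof -
      have "e 0 * f k = 1" using prod[OF n0 that] eq B(2)[OF that] A(2)[OF that] that by simp
      hence "d 0 * (e 0 * f k) = d 0" by simp
      thus ?thesis using de[OF n0] by (simp add: mult.assoc[symmetric])
    qed
    have ek: "e k = e 0" if "k < n" for k
    proof -
      have "e k * f 0 = 1" using prod[OF that n0] eq B(2)[OF that] A(2)[OF that] that by simp
      hence 1: "e k * d 0 = 1" using fk[OF n0] by simp
      have "e k = e k * (d 0 * e 0)" using de[OF n0] by simp
      also have "\<dots> = e 0" using 1 by (simp add: mult.assoc[symmetric])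
      finally show ?thesis .
    qed
    have dk: "d k = d 0" if "k < n" for k
    proof -
      have "d k = d k * (e k * d 0)" using ek[OF that] de[OF n0] by simp
      also have "\<dots> = d 0" using de[OF that] by (simp add: mult.assoc[symmetric])
      finally show ?thesis .
    qed
    have fk': "f k = x0" and ek': "e k = y0" and dk': "d k = x0" if "k < n" for k
      using fk[OF that] ek[OF that] dk[OF that] x0_def y0_def by auto
    have xy0: "x0 * y0 = 1" "y0 * x0 = 1" using de[OF n0] x0_def y0_def by auto
    show "\<exists>x y. x * y = 1 \<and> y * x = 1 \<and> D1 = x \<cdot>\<^sub>m 1\<^sub>m n \<and> D2 = x \<cdot>\<^sub>m 1\<^sub>m n \<and>
                  B = mat n n (\<lambda>(i,j). y * A $$ (i,j) * x)"
    proof (intro exI conjI)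
      show "x0 * y0 = 1" "y0 * x0 = 1" using xy0 by auto
      show "D1 = x0 \<cdot>\<^sub>m 1\<^sub>m n"
        using D1 dk' unfolding d_def by (intro eq_matI) (auto simp: diagonal_mat_def)
      show "D2 = x0 \<cdot>\<^sub>m 1\<^sub>m n"
        using D2 fk' unfolding f_def by (intro eq_matI) (auto simp: diagonal_mat_def)
      show "B = mat n n (\<lambda>(i,j). y0 * A $$ (i,j) * x0)"
      proof (rule eq_matI)
        fix i j assume "i < dim_row (mat n n (\<lambda>(i,j). y0 * A $$ (i,j) * x0))"
          "j < dim_col (mat n n (\<lambda>(i,j). y0 * A $$ (i,j) * x0))"
        hence ij: "i < n" "j < n" by auto
        show "B $$ (i,j) = mat n n (\<lambda>(i,j). y0 * A $$ (i,j) * x0) $$ (i,j)"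
          using ij eq prod[OF ij] ek'[OF ij(1)] fk'[OF ij(2)] by simp
      qed (use B(1) in auto)
    qed
  next
    assume "\<exists>x y. x * y = 1 \<and> y * x = 1 \<and> D1 = x \<cdot>\<^sub>m 1\<^sub>m n \<and> D2 = x \<cdot>\<^sub>m 1\<^sub>m n \<and>
                  B = mat n n (\<lambda>(i,j). y * A $$ (i,j) * x)"
    then obtain x y where xy: "x * y = 1" "y * x = 1" "D1 = x \<cdot>\<^sub>m 1\<^sub>m n" "D2 = x \<cdot>\<^sub>m 1\<^sub>m n"
      "B = mat n n (\<lambda>(i,j). y * A $$ (i,j) * x)" by blast
    have dx: "d i = x" "f i = x" if "i < n" for i using xy that d_def f_def by auto
    have ey: "e i = y" if "i < n" for i
    proof -
      have "e i = y * (x * e i)" using xy(2) by (simp add: mult.assoc[symmetric])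
      also have "x * e i = 1" using de[OF that] dx[OF that] by simp
      finally show ?thesis by simp
    qed
    show "B = E1 * A * D2"
    proof (rule eq_matI)
      fix i j assume "i < dim_row (E1 * A * D2)" "j < dim_col (E1 * A * D2)"
      hence ij: "i < n" "j < n" using dimP by auto
      show "B $$ (i,j) = (E1 * A * D2) $$ (i,j)"
        using xy(5) ij prod[OF ij] ey[OF ij(1)] dx(2)[OF ij(2)] by simp
    qed (use xy(5) dimP in auto)
  qed
qed

theorem lemma3:
  fixes A B D1 D2 E1 :: "'a::ring_1 mat" and n :: nat
  assumes "n \<ge> 1"
    and "inv_diag n D1" and "inv_diag n D2"
    and "E1 \<in> carrier_mat n n" and "inverts_mat D1 E1" and "inverts_mat E1 D1"
    and "hatM n A" and "hatM n B"
  shows "(B = E1 * A * D2 \<longleftrightarrow>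
           (\<exists>x y. x * y = 1 \<and> y * x = 1 \<and> D1 = x \<cdot>\<^sub>m 1\<^sub>m n \<and> D2 = x \<cdot>\<^sub>m 1\<^sub>m n \<and>
                  B = mat n n (\<lambda>(i,j). y * A $$ (i,j) * x)))
       \<and> (diag_equiv n A B \<longleftrightarrow>
           (\<exists>x y. x * y = 1 \<and> y * x = 1 \<and> B = mat n n (\<lambda>(i,j). y * A $$ (i,j) * x)))"
proof
  show "(B = E1 * A * D2 \<longleftrightarrow>
           (\<exists>x y. x * y = 1 \<and> y * x = 1 \<and> D1 = x \<cdot>\<^sub>m 1\<^sub>m n \<and> D2 = x \<cdot>\<^sub>m 1\<^sub>m n \<and>
                  B = mat n n (\<lambda>(i,j). y * A $$ (i,j) * x)))"
    by (rule part1[OF assms])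
  show "diag_equiv n A B \<longleftrightarrow>
           (\<exists>x y. x * y = 1 \<and> y * x = 1 \<and> B = mat n n (\<lambda>(i,j). y * A $$ (i,j) * x))"
  proof
    assume "diag_equiv n A B"
    then obtain F1 F2 G1 where h: "inv_diag n F1" "inv_diag n F2" "G1 \<in> carrier_mat n n"
      "inverts_mat F1 G1" "inverts_mat G1 F1" "B = G1 * A * F2"
      unfolding diag_equiv_def by blast
    from part1[OF assms(1) h(1-5) assms(7,8)] h(6) show
      "\<exists>x y. x * y = 1 \<and> y * x = 1 \<and> B = mat n n (\<lambda>(i,j). y * A $$ (i,j) * x)" by blast
  next
    assume "\<exists>x y. x * y = 1 \<and> y * x = 1 \<and> B = mat n n (\<lambda>(i,j). y * A $$ (i,j) * x)"
    then obtain x y where xy: "x * y = 1" "y * x = 1" "B = mat n n (\<lambda>(i,j). y * A $$ (i,j) * x)"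
      by blast
    define X where "X = (x \<cdot>\<^sub>m 1\<^sub>m n :: 'a mat)"
    define Y where "Y = (y \<cdot>\<^sub>m 1\<^sub>m n :: 'a mat)"
    have XC: "X \<in> carrier_mat n n" "diagonal_mat X" and YC: "Y \<in> carrier_mat n n" "diagonal_mat Y"
      unfolding X_def Y_def diagonal_mat_def by auto
    have XY: "inverts_mat X Y" unfolding inverts_mat_def
    proof (rule eq_matI)
      fix i j assume "i < dim_row (1\<^sub>m (dim_row X) :: 'a mat)" "j < dim_col (1\<^sub>m (dim_row X) :: 'a mat)"
      hence ij: "i < n" "j < n" using XC by auto
      show "(X * Y) $$ (i,j) = 1\<^sub>m (dim_row X) $$ (i,j)"
        using diag_left[OF XC(1,2) YC(1) ij] ij xy XC by (auto simp: X_def Y_def)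
    qed (use XC YC in auto)
    have YX: "inverts_mat Y X" unfolding inverts_mat_def
    proof (rule eq_matI)
      fix i j assume "i < dim_row (1\<^sub>m (dim_row Y) :: 'a mat)" "j < dim_col (1\<^sub>m (dim_row Y) :: 'a mat)"
      hence ij: "i < n" "j < n" using YC by auto
      show "(Y * X) $$ (i,j) = 1\<^sub>m (dim_row Y) $$ (i,j)"
        using diag_left[OF YC(1,2) XC(1) ij] ij xy YC by (auto simp: X_def Y_def)
    qed (use XC YC in auto)
    have iX: "inv_diag n X" unfolding inv_diag_def invertible_mat_def square_mat.simps
      using XC XY YX by auto
    have "B = Y * A * X"
      using part1[OF assms(1) iX iX YC(1) XY YX assms(7,8)] xy X_def by blast
    thus "diag_equiv n A B" unfolding diag_equiv_def using iX YC XY YX by blast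
  qed
qed

end
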